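(* Let $G$ be a locally compact abelian group with identity $e$, $\gamma\in\Gamma$, $s\ge0$, and assume that \[ \sup_{\xi\in G^\wedge}\frac{|\xi(h)-1|}{(1+\gamma(\xi)^2)^s}\longrightarrow0\quad\text{as } h\to e \] (in the sense that for every $\epsilon>0$ there is an open neighbourhood $U_\epsilon$ of $e$ with $\frac{|\xi(h)-1|}{(1+\gamma(\xi)^2)^s}\le\epsilon$ for all $h\in U_\epsilon$, $\xi\in G^\wedge$). Then there is a function $C:G\to[0,\infty]$ with $C(h)\to0$ as $h\to e$ (in the same sense) such that for every $f\in H^s_\gamma(G)$ and every $h\in G$, \[ \int_G|f(xh)-f(x)|^2\,d\mu_G(x)\le C(h)\,\|f\|^2_{H^s_\gamma(G)}. \]
   Context: $G$ is a locally compact abelian group with Haar measure $\mu_G$; $G^\wedge$ is its dual group (continuous homomorphisms $G\to\{z\in\mathbb C:|z|=1\}$, a locally compact abelian group under pointwise multiplication) with Haar measure $\mu_{G^\wedge}$ normalized so that the Plancherel theorem and Fourier inversion hold. For $f\in L^1_{\mu_G}(G)$, $\hat f(\xi)=\int_G\overline{\xi(x)}f(x)\,d\mu_G(x)$, extended to $L^2$ by Plancherel. $\Gamma$ is the set of functions $\gamma:G^\wedge\to[0,\infty)$ for which there is a constant $c_\gamma$ with $\gamma(\alpha\beta)\le c_\gamma[\gamma(\alpha)+\gamma(\beta)]$ for all $\alpha,\beta\in G^\wedge$. For $\gamma\in\Gamma$ and real $s\ge0$, $H^s_\gamma(G)$ is the set of $f\in L^2_{\mu_G}(G)$ with $\|f\|_{H^s_\gamma(G)}=\left(\int_{G^\wedge}(1+\gamma(\xi)^2)^s|\hat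 f(\xi)|^2\,d\mu_{G^\wedge}(\xi)\right)^{1/2}<\infty$. *)

theory Defs
  imports "HOL-Analysis.Analysis"
begin

text \<open>The LCA group G is a type of class topological_ab_group_add (written additively,
  identity 0, so xh becomes x + h).\<close>

definition dual_group :: "('g::topological_ab_group_add \<Rightarrow> complex) set" where
  "dual_group = {\<xi>. continuous_on UNIV \<xi> \<and> (\<forall>x. cmod (\<xi> x) = 1)
                      \<and> (\<forall>x y. \<xi> (x + y) = \<xi> x * \<xi> y)}"

definition dual_topology :: "('g::topological_ab_group_add \<Rightarrow> complex) topology" where
  "dual_topology = topology_generated_by
     {{\<xi>\<in>dual_group. \<xi> ` K \<subseteq> V} | K V. compact K \<and> open V}"

definition borel_of :: "'a topology \<Rightarrow> 'a set set" where
  "borel_of X = sigma_sets (topspace X) {U. openin X U}"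

definition radon_on :: "'a topology \<Rightarrow> 'a measure \<Rightarrow> bool" where
  "radon_on X M \<longleftrightarrow> space M = topspace X \<and> sets M = borel_of X
     \<and> (\<forall>K. compactin X K \<longrightarrow> emeasure M K < \<infinity>)
     \<and> (\<forall>A\<in>sets M. emeasure M A = (INF U\<in>{U. openin X U \<and> A \<subseteq> U}. emeasure M U))
     \<and> (\<forall>U. openin X U \<longrightarrow> emeasure M U = (SUP K\<in>{K. compactin X K \<and> K \<subseteq> U}. emeasure M K))"

definition haar_measure :: "'g::topological_ab_group_add measure \<Rightarrow> bool" where
  "haar_measure M \<longleftrightarrow> radon_on euclidean M \<and> emeasure M UNIV \<noteq> 0
     \<and> (\<forall>A\<in>sets M. \<forall>x. emeasure M ((\<lambda>y. x + y) ` A) = emeasure M A)"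

definition dual_haar_measure :: "('g::topological_ab_group_add \<Rightarrow> complex) measure \<Rightarrow> bool" where
  "dual_haar_measure N \<longleftrightarrow> radon_on dual_topology N \<and> emeasure N dual_group \<noteq> 0
     \<and> (\<forall>A\<in>sets N. \<forall>\<eta>\<in>dual_group.
           emeasure N ((\<lambda>\<xi> x. \<eta> x * \<xi> x) ` A) = emeasure N A)"

definition L2 :: "'a measure \<Rightarrow> ('a \<Rightarrow> complex) set" where
  "L2 M = {f. f \<in> borel_measurable M \<and> integrable M (\<lambda>x. (cmod (f x))\<^sup>2)}"

definition fourier_L1 :: "'g measure \<Rightarrow> ('g \<Rightarrow> complex) \<Rightarrow> ('g \<Rightarrow> complex) \<Rightarrow> complex" where
  "fourier_L1 M f \<xi> = (\<integral>x. cnj (\<xi> x) * f x \<partial>M)"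

definition plancherel_normalized :: "'g measure \<Rightarrow> ('g \<Rightarrow> complex) measure \<Rightarrow> bool" where
  "plancherel_normalized M N \<longleftrightarrow>
     (\<forall>f. f \<in> L2 M \<and> integrable M f \<longrightarrow>
        fourier_L1 M f \<in> L2 N \<and>
        (\<integral>\<xi>. (cmod (fourier_L1 M f \<xi>))\<^sup>2 \<partial>N) = (\<integral>x. (cmod (f x))\<^sup>2 \<partial>M))"

definition fourier_L2 :: "'g measure \<Rightarrow> ('g \<Rightarrow> complex) measure \<Rightarrow> ('g \<Rightarrow> complex)
                          \<Rightarrow> ('g \<Rightarrow> complex) \<Rightarrow> complex" where
  "fourier_L2 M N f = (SOME g. g \<in> L2 N \<and>
     (\<exists>F. (\<forall>n. F n \<in> L2 M \<and> integrable M (F n)) \<and>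
          (\<lambda>n. \<integral>x. (cmod (F n x - f x))\<^sup>2 \<partial>M) \<longlonglongrightarrow> 0 \<and>
          (\<lambda>n. \<integral>\<xi>. (cmod (fourier_L1 M (F n) \<xi> - g \<xi>))\<^sup>2 \<partial>N) \<longlonglongrightarrow> 0))"

definition Gamma_class :: "(('g::topological_ab_group_add \<Rightarrow> complex) \<Rightarrow> real) \<Rightarrow> bool" where
  "Gamma_class \<gamma> \<longleftrightarrow> (\<forall>\<xi>\<in>dual_group. 0 \<le> \<gamma> \<xi>) \<and>
     (\<exists>c. \<forall>\<alpha>\<in>dual_group. \<forall>\<beta>\<in>dual_group. \<gamma> (\<lambda>x. \<alpha> x * \<beta> x) \<le> c * (\<gamma> \<alpha> + \<gamma> \<beta>))"

definition Hs_norm2 :: "'g measure \<Rightarrow> ('g \<Rightarrow> complex) measure \<Rightarrow> (('g \<Rightarrow> complex) \<Rightarrow> real)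
                        \<Rightarrow> real \<Rightarrow> ('g \<Rightarrow> complex) \<Rightarrow> ennreal" where
  "Hs_norm2 M N \<gamma> s f =
     (\<integral>\<^sup>+ \<xi>. ennreal ((1 + (\<gamma> \<xi>)\<^sup>2) powr s * (cmod (fourier_L2 M N f \<xi>))\<^sup>2) \<partial>N)"

definition Hs :: "'g measure \<Rightarrow> ('g \<Rightarrow> complex) measure \<Rightarrow> (('g \<Rightarrow> complex) \<Rightarrow> real)
                  \<Rightarrow> real \<Rightarrow> ('g \<Rightarrow> complex) set" where
  "Hs M N \<gamma> s = {f \<in> L2 M. Hs_norm2 M N \<gamma> s f < \<infinity>}"

end

theory Submission
  imports Defs
begin


lemma haar_sets:
  assumes "haar_measure (\<mu>::'g::topological_ab_group_add measure)"
  shows "sets \<mu> = sets borel" "space \<mu> = UNIV"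
proof -
  have r: "radon_on euclidean \<mu>" using assms by (simp add: haar_measure_def)
  then have "sets \<mu> = sigma_sets UNIV {U. open U}"
    by (simp add: radon_on_def borel_of_def)
  also have "\<dots> = sets borel" by (simp add: borel_def sets_measure_of)
  finally show "sets \<mu> = sets borel" .
  show "space \<mu> = UNIV" using r by (simp add: radon_on_def)
qed

lemma dual_space:
  assumes "dual_haar_measure \<nu>"
  shows "space \<nu> \<subseteq> dual_group"
  using assms unfolding dual_haar_measure_def radon_on_def dual_topology_def
  by auto

lemma haar_distr:
  fixes \<mu> :: "'g::topological_ab_group_add measure"
  assumes "haar_measure \<mu>"
  shows "distr \<mu> \<mu> (\<lambda>x. x + h) = \<mu>"
proof -
  have S: "sets \<mu> = sets borel" "space \<mu> = UNIV" using haar_sets[OF assms] by auto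
  have m: "(\<lambda>x. x + h) \<in> measurable \<mu> \<mu>"
    using S by (simp add: measurable_cong_sets[OF S(1) S(1)] continuous_on_add continuous_on_id continuous_on_const borel_measurable_continuous_onI)
  show ?thesis
  proof (rule measure_eqI)
    show "sets (distr \<mu> \<mu> (\<lambda>x. x + h)) = sets \<mu>" by simp
    fix A assume A: "A \<in> sets (distr \<mu> \<mu> (\<lambda>x. x + h))"
    then have A': "A \<in> sets \<mu>" by simp
    have "(\<lambda>x. x + h) -` A \<inter> space \<mu> = (\<lambda>y. (-h) + y) ` A"
      using S by (force simp: image_iff algebra_simps)
    moreover have "emeasure \<mu> ((\<lambda>y. (-h) + y) ` A) = emeasure \<mu> A"
      using assms A' unfolding haar_measure_def by blast
    ultimately show "emeasure (distr \<mu> \<mu> (\<lambda>x. x + h)) A = emeasure \<mu> A"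
      using A' m by (simp add: emeasure_distr)
  qed
qed

lemma haar_nn_shift:
  fixes \<mu> :: "'g::topological_ab_group_add measure"
  assumes "haar_measure \<mu>" "g \<in> borel_measurable \<mu>"
  shows "(\<integral>\<^sup>+x. g (x + h) \<partial>\<mu>) = (\<integral>\<^sup>+x. g x \<partial>\<mu>)"
proof -
  have S: "sets \<mu> = sets borel" "space \<mu> = UNIV" using haar_sets[OF assms(1)] by auto
  have m: "(\<lambda>x. x + h) \<in> measurable \<mu> \<mu>"
    using S by (simp add: measurable_cong_sets[OF S(1) S(1)] continuous_on_add continuous_on_id continuous_on_const borel_measurable_continuous_onI)
  have "(\<integral>\<^sup>+x. g x \<partial>\<mu>) = (\<integral>\<^sup>+x. g x \<partial>(distr \<mu> \<mu> (\<lambda>x. x + h)))"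
    using haar_distr[OF assms(1)] by simp
  also have "\<dots> = (\<integral>\<^sup>+x. g (x + h) \<partial>\<mu>)"
    using m assms(2) by (simp add: nn_integral_distr)
  finally show ?thesis by simp
qed

lemma haar_shift_meas:
  fixes \<mu> :: "'g::topological_ab_group_add measure"
  assumes "haar_measure \<mu>" "g \<in> borel_measurable \<mu>"
  shows "(\<lambda>x. g (x + h)) \<in> borel_measurable \<mu>"
proof -
  have S: "sets \<mu> = sets borel" "space \<mu> = UNIV" using haar_sets[OF assms(1)] by auto
  have m: "(\<lambda>x. x + h) \<in> measurable \<mu> \<mu>"
    using S by (simp add: measurable_cong_sets[OF S(1) S(1)] continuous_on_add continuous_on_id continuous_on_const borel_measurable_continuous_onI)
  show ?thesis using measurable_compose[OF m assms(2)] by simp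
qed

lemma haar_int_shift:
  fixes \<mu> :: "'g::topological_ab_group_add measure" and g :: "'g \<Rightarrow> 'b::{banach,second_countable_topology}"
  assumes "haar_measure \<mu>" "g \<in> borel_measurable \<mu>"
  shows "integrable \<mu> (\<lambda>x. g (x + h)) = integrable \<mu> g"
    "(\<integral>x. g (x + h) \<partial>\<mu>) = (\<integral>x. g x \<partial>\<mu>)"
proof -
  have S: "sets \<mu> = sets borel" "space \<mu> = UNIV" using haar_sets[OF assms(1)] by auto
  have m: "(\<lambda>x. x + h) \<in> measurable \<mu> \<mu>"
    using S by (simp add: measurable_cong_sets[OF S(1) S(1)] continuous_on_add continuous_on_id continuous_on_const borel_measurable_continuous_onI)
  have D: "distr \<mu> \<mu> (\<lambda>x. x + h) = \<mu>" using haar_distr[OF assms(1)] .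
  show "integrable \<mu> (\<lambda>x. g (x + h)) = integrable \<mu> g"
    using integrable_distr_eq[OF m assms(2)] D by simp
  show "(\<integral>x. g (x + h) \<partial>\<mu>) = (\<integral>x. g x \<partial>\<mu>)"
    using integral_distr[OF m assms(2)] D by simp
qed

lemma sq_ineq:
  fixes a b :: complex and d :: real
  assumes "d > 0"
  shows "(cmod a)\<^sup>2 \<le> (1 + d) * (cmod b)\<^sup>2 + (1 + 1/d) * (cmod (a - b))\<^sup>2"
proof -
  have t: "cmod a \<le> cmod b + cmod (a - b)" by (metis add.commute diff_add_cancel norm_triangle_ineq)
  have "(cmod a)\<^sup>2 \<le> (cmod b + cmod (a - b))\<^sup>2" using t by (simp add: power_mono)
  also have "\<dots> = (cmod b)\<^sup>2 + 2 * (cmod b * cmod (a - b)) + (cmod (a-b))\<^sup>2" by (simp add: power2_sum)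
  also have "2 * (cmod b * cmod (a - b)) \<le> d * (cmod b)\<^sup>2 + (1/d) * (cmod (a-b))\<^sup>2"
  proof -
    have "0 \<le> (sqrt d * cmod b - cmod (a-b) / sqrt d)\<^sup>2" by simp
    also have "\<dots> = d * (cmod b)\<^sup>2 - 2 * (cmod b * cmod (a - b)) + (1/d) * (cmod (a-b))\<^sup>2"
      using assms by (simp add: power2_diff power_divide field_simps real_sqrt_mult[symmetric])
    finally show ?thesis by simp
  qed
  finally show ?thesis by (simp add: algebra_simps)
qed

lemma sq_ineq2:
  fixes a b :: complex
  shows "(cmod (a - b))\<^sup>2 \<le> 2 * (cmod a)\<^sup>2 + 2 * (cmod b)\<^sup>2"
proof -
  have "cmod (a - b) \<le> cmod a + cmod b" by (rule norm_triangle_ineq4)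
  then have "(cmod (a - b))\<^sup>2 \<le> (cmod a + cmod b)\<^sup>2" by (simp add: power_mono)
  also have "\<dots> \<le> 2 * (cmod a)\<^sup>2 + 2 * (cmod b)\<^sup>2"
  proof -
    have "0 \<le> (cmod a - cmod b)\<^sup>2" by simp
    then show ?thesis by (simp add: power2_sum power2_diff)
  qed
  finally show ?thesis .
qed

lemma ennreal_cinv:
  fixes c :: ennreal
  assumes "c \<noteq> 0" "c < \<infinity>"
  shows "c * (inverse c * x) = x"
proof -
  obtain r where r: "c = ennreal r" "0 \<le> r" using assms(2) by (cases c) auto
  then have "r > 0" using assms(1) by auto
  then have "c * inverse c = 1" using r by (simp add: inverse_ennreal ennreal_mult[symmetric])
  then show ?thesis by (simp add: mult.assoc[symmetric])
qed

lemma nn_cmult_le: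
  fixes c :: ennreal
  assumes "c < \<infinity>"
  shows "(\<integral>\<^sup>+x. c * f x \<partial>M) \<le> c * (\<integral>\<^sup>+x. f x \<partial>M)"
proof (cases "c = 0")
  case True then show ?thesis by simp
next
  case False
  show ?thesis
    unfolding nn_integral_def
  proof (rule SUP_least)
    fix g assume g: "g \<in> {g. simple_function M g \<and> g \<le> (\<lambda>x. c * f x)}"
    define g' where "g' = (\<lambda>x. inverse c * g x)"
    have sg': "simple_function M g'" using g unfolding g'_def by auto
    have gg: "g = (\<lambda>x. c * g' x)"
      using False assms by (auto simp: g'_def ennreal_cinv intro!: ext)
    have "g' \<le> f"
    proof (rule le_funI)
      fix x
      have "g x \<le> c * f x" using g by (auto simp: le_fun_def)
      then have "inverse c * g x \<le> inverse c * (c * f x)" by (rule mult_left_mono) simp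
      also have "\<dots> = f x" using False assms
        by (metis ennreal_cinv mult.left_commute)
      finally show "g' x \<le> f x" by (simp add: g'_def)
    qed
    then have "integral\<^sup>S M g' \<le> (SUP g \<in> {g. simple_function M g \<and> g \<le> f}. integral\<^sup>S M g)"
      using sg' by (intro SUP_upper) auto
    then have "c * integral\<^sup>S M g' \<le> c * (SUP g \<in> {g. simple_function M g \<and> g \<le> f}. integral\<^sup>S M g)"
      by (rule mult_left_mono) simp
    then show "integral\<^sup>S M g \<le> c * (SUP g \<in> {g. simple_function M g \<and> g \<le> f}. integral\<^sup>S M g)"
      using sg' by (subst gg) simp
  qed
qed


definition nn2 :: "'a measure \<Rightarrow> ('a \<Rightarrow> complex) \<Rightarrow> ennreal" where
  "nn2 M u = (\<integral>\<^sup>+x. ennreal ((cmod (u x))\<^sup>2) \<partial>M)"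

lemma L2_iff_nn2: "u \<in> L2 M \<longleftrightarrow> u \<in> borel_measurable M \<and> nn2 M u < \<infinity>"
proof -
  have "u \<in> borel_measurable M \<Longrightarrow> integrable M (\<lambda>x. (cmod (u x))\<^sup>2) \<longleftrightarrow> nn2 M u < \<infinity>"
    unfolding nn2_def by (subst integrable_iff_bounded) auto
  then show ?thesis unfolding L2_def by auto
qed

lemma nn2_int: "u \<in> L2 M \<Longrightarrow> nn2 M u = ennreal (\<integral>x. (cmod (u x))\<^sup>2 \<partial>M)"
  unfolding nn2_def L2_def by (auto intro!: nn_integral_eq_integral)

lemma nn2_diff_le: "u \<in> borel_measurable M \<Longrightarrow> v \<in> borel_measurable M \<Longrightarrow>
   nn2 M (\<lambda>x. u x - v x) \<le> 2 * nn2 M u + 2 * nn2 M v"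
proof -
  assume [measurable]: "u \<in> borel_measurable M" "v \<in> borel_measurable M"
  have "nn2 M (\<lambda>x. u x - v x) \<le> (\<integral>\<^sup>+x. 2 * ennreal ((cmod (u x))\<^sup>2) + 2 * ennreal ((cmod (v x))\<^sup>2) \<partial>M)"
    unfolding nn2_def
  proof (intro nn_integral_mono)
    fix x
    have "(cmod (u x - v x))\<^sup>2 \<le> 2 * (cmod (u x))\<^sup>2 + 2 * (cmod (v x))\<^sup>2" by (rule sq_ineq2)
    then have "ennreal ((cmod (u x - v x))\<^sup>2) \<le> ennreal (2 * (cmod (u x))\<^sup>2 + 2 * (cmod (v x))\<^sup>2)"
      by (rule ennreal_leI)
    also have "\<dots> = 2 * ennreal ((cmod (u x))\<^sup>2) + 2 * ennreal ((cmod (v x))\<^sup>2)"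
      by (simp add: ennreal_mult')
    finally show "ennreal ((cmod (u x - v x))\<^sup>2) \<le> 2 * ennreal ((cmod (u x))\<^sup>2) + 2 * ennreal ((cmod (v x))\<^sup>2)" .
  qed
  also have "\<dots> = 2 * nn2 M u + 2 * nn2 M v"
    unfolding nn2_def by (simp add: nn_integral_add nn_integral_cmult)
  finally show ?thesis .
qed

lemma L2_diff: "u \<in> L2 M \<Longrightarrow> v \<in> L2 M \<Longrightarrow> (\<lambda>x. u x - v x) \<in> L2 M"
  using nn2_diff_le[of u M v] unfolding L2_iff_nn2
  by (auto simp: ennreal_mult_less_top order_le_less_trans)

lemma nn2_split: "d > 0 \<Longrightarrow> u \<in> borel_measurable M \<Longrightarrow> v \<in> borel_measurable M \<Longrightarrow>
   nn2 M u \<le> ennreal (1 + d) * nn2 M v + ennreal (1 + 1/d) * nn2 M (\<lambda>x. u x - v x)"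
proof -
  assume d: "d > 0" and [measurable]: "u \<in> borel_measurable M" "v \<in> borel_measurable M"
  have "nn2 M u \<le> (\<integral>\<^sup>+x. ennreal (1 + d) * ennreal ((cmod (v x))\<^sup>2) + ennreal (1 + 1/d) * ennreal ((cmod (u x - v x))\<^sup>2) \<partial>M)"
    unfolding nn2_def
  proof (intro nn_integral_mono)
    fix x
    have "(cmod (u x))\<^sup>2 \<le> (1 + d) * (cmod (v x))\<^sup>2 + (1 + 1/d) * (cmod (u x - v x))\<^sup>2"
      using sq_ineq[OF d] .
    then show "ennreal ((cmod (u x))\<^sup>2) \<le> ennreal (1 + d) * ennreal ((cmod (v x))\<^sup>2) + ennreal (1 + 1/d) * ennreal ((cmod (u x - v x))\<^sup>2)"
      using d by (simp add: ennreal_mult[symmetric] ennreal_plus[symmetric] ennreal_leI del: ennreal_plus)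
  qed
  also have "\<dots> = ennreal (1 + d) * nn2 M v + ennreal (1 + 1/d) * nn2 M (\<lambda>x. u x - v x)"
    unfolding nn2_def by (simp add: nn_integral_add nn_integral_cmult)
  finally show ?thesis .
qed



lemma amgm_aux:
  fixes d :: real and k :: nat
  shows "d \<le> (4 ^ k * d\<^sup>2 + (1/4) ^ k) / 2"
proof -
  have "0 \<le> (2 ^ k * d - (1/2) ^ k)\<^sup>2" by simp
  also have "\<dots> = 4 ^ k * d\<^sup>2 - 2 * d * (2 ^ k * (1/2)^k) + (1/4) ^ k"
    by (simp add: power2_diff power_mult_distrib power_mult[symmetric] mult_ac power_divide)
       (simp add: power_mult power2_eq_square power_mult_distrib[symmetric])
  also have "2 ^ k * (1/2::real)^k = 1" by (simp add: power_mult_distrib[symmetric])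
  finally show ?thesis by simp
qed

lemma L2_complete:
  fixes u :: "nat \<Rightarrow> 'a \<Rightarrow> complex"
  assumes L2: "\<And>n. u n \<in> L2 N"
    and cauchy: "\<And>e. e > 0 \<Longrightarrow> \<exists>K. \<forall>m\<ge>K. \<forall>n\<ge>K. nn2 N (\<lambda>x. u m x - u n x) < ennreal e"
  shows "\<exists>g. g \<in> L2 N \<and> (\<forall>e>0. \<exists>K. \<forall>n\<ge>K. nn2 N (\<lambda>x. u n x - g x) \<le> ennreal e)"
proof -
  have meas[measurable]: "\<And>n. u n \<in> borel_measurable N" using L2 by (simp add: L2_def)
  obtain K where K: "\<And>e m n. e > 0 \<Longrightarrow> m \<ge> K e \<Longrightarrow> n \<ge> K e \<Longrightarrow> nn2 N (\<lambda>x. u m x - u n x) < ennreal e"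
    using cauchy by metis
  define r where "r = rec_nat (K 1) (\<lambda>k rk. max (Suc rk) (K ((1/8) ^ Suc k)))"
  have r0: "r 0 = K 1" and rS: "\<And>k. r (Suc k) = max (Suc (r k)) (K ((1/8) ^ Suc k))"
    by (simp_all add: r_def)
  have rK: "r k \<ge> K ((1/8)^k)" for k by (cases k) (auto simp: r0 rS)
  have rinc: "r k < r (Suc k)" for k by (simp add: rS)
  then have smr: "strict_mono r" by (simp add: strict_mono_Suc_iff)
  define d where "d k x = u (r (Suc k)) x - u (r k) x" for k x
  have [measurable]: "\<And>k. d k \<in> borel_measurable N" unfolding d_def by measurable
  have dk: "nn2 N (d k) < ennreal ((1/8)^k)" for k
    unfolding d_def using K[of "(1/8)^k" "r (Suc k)" "r k"] rK[of k] rinc[of k] by simp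
  define S where "S x = (\<Sum>k. ennreal (4^k * (cmod (d k x))\<^sup>2))" for x
  have "(\<integral>\<^sup>+x. S x \<partial>N) = (\<Sum>k. \<integral>\<^sup>+x. ennreal (4^k * (cmod (d k x))\<^sup>2) \<partial>N)"
    unfolding S_def by (rule nn_integral_suminf) measurable
  also have "\<dots> = (\<Sum>k. ennreal (4^k) * nn2 N (d k))"
    unfolding nn2_def by (simp add: ennreal_mult nn_integral_cmult)
  also have "\<dots> \<le> (\<Sum>k. ennreal ((1/2)^k))"
  proof (rule suminf_le)
    fix k
    have "ennreal (4^k) * nn2 N (d k) \<le> ennreal (4^k) * ennreal ((1/8)^k)"
      using dk[of k] by (intro mult_left_mono) auto
    also have "\<dots> = ennreal ((1/2)^k)"
      by (simp add: ennreal_mult[symmetric] power_mult_distrib[symmetric])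
    finally show "ennreal (4^k) * nn2 N (d k) \<le> ennreal ((1/2)^k)" .
  qed auto
  also have "\<dots> = ennreal (\<Sum>k. (1/2)^k)"
    by (rule suminf_ennreal2) auto
  also have "\<dots> < \<infinity>" by simp
  finally have "(\<integral>\<^sup>+x. S x \<partial>N) < \<infinity>" .
  then have aeS: "AE x in N. S x < \<infinity>"
    by (intro finite_nn_integral_imp_ae_finite) (auto simp: S_def)
  have conv: "convergent (\<lambda>k. u (r k) x)" if Sx: "S x < \<infinity>" for x
  proof -
    have "summable (\<lambda>k. 4^k * (cmod (d k x))\<^sup>2)"
      using Sx unfolding S_def by (intro summable_suminf_not_top) auto
    then have "summable (\<lambda>k. (4^k * (cmod (d k x))\<^sup>2 + (1/4)^k) / 2)"
      by (intro summable_divide summable_add) auto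
    then have "summable (\<lambda>k. norm (d k x))"
    proof (rule summable_comparison_test'[where N=0])
      fix n show "norm (norm (d n x)) \<le> (4^n * (cmod (d n x))\<^sup>2 + (1/4)^n) / 2"
        using amgm_aux[of "cmod (d n x)" n] by simp
    qed
    then have sm: "summable (\<lambda>k. d k x)" by (rule summable_norm_cancel)
    have "(\<lambda>n. \<Sum>i<n. d i x) \<longlonglongrightarrow> (\<Sum>i. d i x)" using summable_LIMSEQ[OF sm] .
    moreover have "(\<lambda>n. \<Sum>i<n. d i x) = (\<lambda>n. u (r n) x - u (r 0) x)"
      unfolding d_def using sum_lessThan_telescope[of "\<lambda>i. u (r i) x"] by simp
    ultimately have "(\<lambda>n. u (r n) x - u (r 0) x) \<longlonglongrightarrow> (\<Sum>i. d i x)" by simp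
    then have "(\<lambda>n. u (r n) x - u (r 0) x + u (r 0) x) \<longlonglongrightarrow> (\<Sum>i. d i x) + u (r 0) x"
      by (rule tendsto_add) simp
    then show ?thesis by (auto simp: convergent_def)
  qed
  define g where "g x = lim (\<lambda>k. u (r k) x)" for x
  have [measurable]: "g \<in> borel_measurable N" unfolding g_def by measurable
  have aelim: "AE x in N. (\<lambda>k. u (r k) x) \<longlonglongrightarrow> g x"
    using aeS by eventually_elim (use conv in \<open>auto simp: g_def convergent_LIMSEQ_iff\<close>)
  have fatou: "nn2 N (\<lambda>x. u n x - g x) \<le> ennreal e"
    if e: "e > 0" and n: "n \<ge> K e" for n e
  proof -
    have "nn2 N (\<lambda>x. u n x - g x) = (\<integral>\<^sup>+x. liminf (\<lambda>k. ennreal ((cmod (u n x - u (r k) x))\<^sup>2)) \<partial>N)"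
      unfolding nn2_def
    proof (rule nn_integral_cong_AE)
      show "AE x in N. ennreal ((cmod (u n x - g x))\<^sup>2) = liminf (\<lambda>k. ennreal ((cmod (u n x - u (r k) x))\<^sup>2))"
        using aelim
      proof eventually_elim
        case (elim x)
        have "(\<lambda>k. ennreal ((cmod (u n x - u (r k) x))\<^sup>2)) \<longlonglongrightarrow> ennreal ((cmod (u n x - g x))\<^sup>2)"
          by (intro tendsto_ennrealI tendsto_intros elim)
        then show ?case by (metis lim_imp_Liminf trivial_limit_sequentially)
      qed
    qed
    also have "\<dots> \<le> liminf (\<lambda>k. nn2 N (\<lambda>x. u n x - u (r k) x))"
      unfolding nn2_def by (rule nn_integral_liminf) measurable
    also have "\<dots> \<le> liminf (\<lambda>k. ennreal e)"
    proof (rule Liminf_mono)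
      have "eventually (\<lambda>k. k \<ge> K e) sequentially" by (rule eventually_ge_at_top)
      then show "\<forall>\<^sub>F k in sequentially. nn2 N (\<lambda>x. u n x - u (r k) x) \<le> ennreal e"
      proof eventually_elim
        case (elim k)
        have "r k \<ge> k" using smr by (rule seq_suble)
        then show ?case using K[OF e n, of "r k"] elim by simp
      qed
    qed
    also have "\<dots> = ennreal e" by (simp add: Liminf_const)
    finally show ?thesis .
  qed
  have gL2: "g \<in> L2 N"
  proof -
    let ?n = "K 1"
    have "nn2 N g = nn2 N (\<lambda>x. u ?n x - (u ?n x - g x))" by simp
    also have "\<dots> \<le> 2 * nn2 N (u ?n) + 2 * nn2 N (\<lambda>x. u ?n x - g x)"
      by (rule nn2_diff_le) measurable
    also have "\<dots> < \<infinity>"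
      using L2[of ?n] fatou[of 1 ?n] unfolding L2_iff_nn2
      by (simp add: ennreal_mult_less_top order_le_less_trans)
    finally show ?thesis unfolding L2_iff_nn2 by simp
  qed
  show ?thesis using gL2 fatou by blast
qed



lemma borel_measurable_cnj'[measurable]:
  "f \<in> borel_measurable M \<Longrightarrow> (\<lambda>x. cnj (f x)) \<in> borel_measurable M"
  by (rule borel_measurable_continuous_on[where f=cnj]) (auto intro: continuous_intros)

lemma tends_from_nn:
  assumes "\<And>n. u n \<in> L2 M" "\<forall>e>0. \<exists>K. \<forall>n\<ge>K. nn2 M (u n) \<le> ennreal e"
  shows "(\<lambda>n. \<integral>x. (cmod (u n x))\<^sup>2 \<partial>M) \<longlonglongrightarrow> 0"
proof (rule LIMSEQ_I)
  fix r :: real assume r: "r > 0"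
  then obtain K where K: "\<forall>n\<ge>K. nn2 M (u n) \<le> ennreal (r/2)" using assms(2) by (meson half_gt_zero)
  show "\<exists>no. \<forall>n\<ge>no. norm ((\<integral>x. (cmod (u n x))\<^sup>2 \<partial>M) - 0) < r"
  proof (intro exI allI impI)
    fix n assume "K \<le> n"
    then have "nn2 M (u n) \<le> ennreal (r/2)" using K by blast
    then have "ennreal (\<integral>x. (cmod (u n x))\<^sup>2 \<partial>M) \<le> ennreal (r/2)"
      using nn2_int[OF assms(1)[of n]] by simp
    then have "(\<integral>x. (cmod (u n x))\<^sup>2 \<partial>M) \<le> r/2" using r by (simp add: ennreal_le_iff)
    moreover have "0 \<le> (\<integral>x. (cmod (u n x))\<^sup>2 \<partial>M)" by simp
    ultimately show "norm ((\<integral>x. (cmod (u n x))\<^sup>2 \<partial>M) - 0) < r" using r by simp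
  qed
qed

lemma nn_from_tends:
  assumes "\<And>n. u n \<in> L2 M" "(\<lambda>n. \<integral>x. (cmod (u n x))\<^sup>2 \<partial>M) \<longlonglongrightarrow> 0"
  shows "\<forall>e>0. \<exists>K. \<forall>n\<ge>K. nn2 M (u n) \<le> ennreal e"
proof (intro allI impI)
  fix e :: real assume e: "e > 0"
  obtain K where K: "\<forall>n\<ge>K. norm ((\<integral>x. (cmod (u n x))\<^sup>2 \<partial>M) - 0) < e"
    using LIMSEQ_D[OF assms(2) e] by blast
  show "\<exists>K. \<forall>n\<ge>K. nn2 M (u n) \<le> ennreal e"
  proof (intro exI allI impI)
    fix n assume "K \<le> n"
    then have "(\<integral>x. (cmod (u n x))\<^sup>2 \<partial>M) \<le> e" using K by fastforce
    then show "nn2 M (u n) \<le> ennreal e" using nn2_int[OF assms(1)[of n]] by (simp add: ennreal_leI)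
  qed
qed

lemma L2_dense:
  assumes f: "f \<in> L2 M"
  shows "\<exists>F. (\<forall>n. F n \<in> L2 M \<and> integrable M (F n)) \<and>
             (\<lambda>n. \<integral>x. (cmod (F n x - f x))\<^sup>2 \<partial>M) \<longlonglongrightarrow> 0"
proof -
  have fm[measurable]: "f \<in> borel_measurable M" and fi: "integrable M (\<lambda>x. (cmod (f x))\<^sup>2)"
    using f by (auto simp: L2_def)
  define F where "F n x = (if inverse (real (Suc n)) \<le> cmod (f x) \<and> cmod (f x) \<le> real (Suc n) then f x else 0)" for n x
  have Fm[measurable]: "F n \<in> borel_measurable M" for n unfolding F_def by measurable
  have FL2: "F n \<in> L2 M" for n
  proof -
    have "nn2 M (F n) \<le> nn2 M f" unfolding nn2_def F_def by (intro nn_integral_mono) auto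
    then show ?thesis using f unfolding L2_iff_nn2 by (auto intro: order_le_less_trans)
  qed
  have Fi: "integrable M (F n)" for n
  proof (rule Bochner_Integration.integrable_bound)
    show "integrable M (\<lambda>x. real (Suc n) * (cmod (f x))\<^sup>2)" using fi by simp
    show "AE x in M. norm (F n x) \<le> norm (real (Suc n) * (cmod (f x))\<^sup>2)"
    proof (rule AE_I2)
      fix x
      show "norm (F n x) \<le> norm (real (Suc n) * (cmod (f x))\<^sup>2)"
      proof (cases "inverse (real (Suc n)) \<le> cmod (f x) \<and> cmod (f x) \<le> real (Suc n)")
        case True
        then have "1 \<le> real (Suc n) * cmod (f x)"
          by (simp add: field_simps)
        then have 1: "cmod (f x) * 1 \<le> cmod (f x) * (real (Suc n) * cmod (f x))"
          by (intro mult_left_mono) auto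
        have "norm (F n x) = cmod (f x) * 1" using True by (simp add: F_def)
        also have "\<dots> \<le> cmod (f x) * (real (Suc n) * cmod (f x))" by (rule 1)
        also have "\<dots> = norm (real (Suc n) * (cmod (f x))\<^sup>2)"
          by (simp add: power2_eq_square mult_ac)
        finally show ?thesis .
      next
        case False
        then have "F n x = 0" unfolding F_def by meson
        then show ?thesis by simp
      qed
    qed
  qed (simp add: Fm)
  have lim: "(\<lambda>n. \<integral>x. (cmod (F n x - f x))\<^sup>2 \<partial>M) \<longlonglongrightarrow> (\<integral>x. 0 \<partial>M)"
  proof (rule integral_dominated_convergence[where w="\<lambda>x. (cmod (f x))\<^sup>2"])
    show "integrable M (\<lambda>x. (cmod (f x))\<^sup>2)" by (rule fi)
    show "AE x in M. (\<lambda>n. (cmod (F n x - f x))\<^sup>2) \<longlonglongrightarrow> 0"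
    proof (rule AE_I2)
      fix x
      show "(\<lambda>n. (cmod (F n x - f x))\<^sup>2) \<longlonglongrightarrow> 0"
      proof (cases "f x = 0")
        case True then show ?thesis by (simp add: F_def)
      next
        case False
        then have pos: "cmod (f x) > 0" by simp
        obtain N1 where N1: "inverse (real (Suc N1)) < cmod (f x)" using reals_Archimedean[OF pos] by blast
        obtain N2 where N2: "cmod (f x) \<le> real N2" using real_arch_simple by blast
        have "eventually (\<lambda>n. (cmod (F n x - f x))\<^sup>2 = 0) sequentially"
          unfolding eventually_sequentially
        proof (intro exI allI impI)
          fix n assume n: "max N1 N2 \<le> n"
          have "inverse (real (Suc n)) \<le> inverse (real (Suc N1))" using n by (simp add: le_imp_inverse_le)
          then have a: "inverse (real (Suc n)) \<le> cmod (f x)" using N1 by linarith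
          have b: "cmod (f x) \<le> real (Suc n)" using n N2 by simp
          from a b show "(cmod (F n x - f x))\<^sup>2 = 0" by (simp add: F_def)
        qed
        then show ?thesis by (rule tendsto_eventually)
      qed
    qed
    show "AE x in M. norm ((cmod (F n x - f x))\<^sup>2) \<le> (cmod (f x))\<^sup>2" for n
      by (rule AE_I2) (simp add: F_def)
  qed measurable
  show ?thesis using FL2 Fi lim by auto
qed



lemma dual_props:
  assumes "\<xi> \<in> dual_group"
  shows "\<xi> 0 = 1" "cmod (\<xi> h) = 1" "\<xi> (x + y) = \<xi> x * \<xi> y"
    "cnj (\<xi> (y + - h)) = cnj (\<xi> y) * \<xi> h" "cmod (\<xi> h - 1) \<le> 2"
    "\<xi> \<in> borel_measurable borel"
proof -
  have c: "continuous_on UNIV \<xi>" and n: "\<And>x. cmod (\<xi> x) = 1" and hom: "\<And>x y. \<xi> (x + y) = \<xi> x * \<xi> y"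
    using assms by (auto simp: dual_group_def)
  show "cmod (\<xi> h) = 1" "\<xi> (x + y) = \<xi> x * \<xi> y" by (fact n hom)+
  have "\<xi> 0 = \<xi> 0 * \<xi> 0" using hom[of 0 0] by simp
  moreover have "\<xi> 0 \<noteq> 0" using n[of 0] by auto
  ultimately show z: "\<xi> 0 = 1" using mult_cancel_left1[of "\<xi> 0" "\<xi> 0"] by simp
  have a: "\<xi> h * \<xi> (-h) = 1" using hom[of h "-h"] z by simp
  have b: "\<xi> h * cnj (\<xi> h) = 1" using complex_norm_square[of "\<xi> h"] n[of h] by simp
  have "\<xi> (-h) = \<xi> (-h) * (\<xi> h * cnj (\<xi> h))" using b by simp
  also have "\<dots> = (\<xi> h * \<xi> (-h)) * cnj (\<xi> h)" by (simp only: mult_ac)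
  also have "\<dots> = cnj (\<xi> h)" using a by simp
  finally have "\<xi> (-h) = cnj (\<xi> h)" .
  then show "cnj (\<xi> (y + - h)) = cnj (\<xi> y) * \<xi> h" using hom[of y "-h"] by simp
  have "cmod (\<xi> h - 1) \<le> cmod (\<xi> h) + cmod 1" by (rule norm_triangle_ineq4)
  then show "cmod (\<xi> h - 1) \<le> 2" using n[of h] by simp
  show "\<xi> \<in> borel_measurable borel" using c by (rule borel_measurable_continuous_onI)
qed

lemma dual_meas_mu:
  assumes "haar_measure \<mu>" "\<xi> \<in> dual_group"
  shows "\<xi> \<in> borel_measurable \<mu>"
proof -
  have "borel_measurable \<mu> = borel_measurable borel"
    by (rule measurable_cong_sets[OF haar_sets(1)[OF assms(1)] refl])
  then show ?thesis using dual_props(6)[OF assms(2)] by blast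
qed

lemma fourier_integrable:
  assumes "haar_measure \<mu>" "\<xi> \<in> dual_group" "integrable \<mu> F"
  shows "integrable \<mu> (\<lambda>x. cnj (\<xi> x) * F x)"
proof (rule Bochner_Integration.integrable_bound[OF assms(3)])
  have [measurable]: "\<xi> \<in> borel_measurable \<mu>" "F \<in> borel_measurable \<mu>"
    using dual_meas_mu[OF assms(1,2)] assms(3) by auto
  show "(\<lambda>x. cnj (\<xi> x) * F x) \<in> borel_measurable \<mu>" by measurable
  show "AE x in \<mu>. norm (cnj (\<xi> x) * F x) \<le> norm (F x)"
    using dual_props(2)[OF assms(2)] by (simp add: norm_mult)
qed

lemma fourier_diff:
  assumes "haar_measure \<mu>" "\<xi> \<in> dual_group" "integrable \<mu> F" "integrable \<mu> G"
  shows "fourier_L1 \<mu> (\<lambda>x. F x - G x) \<xi> = fourier_L1 \<mu> F \<xi> - fourier_L1 \<mu> G \<xi>"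
proof -
  have "(\<integral>x. cnj (\<xi> x) * (F x - G x) \<partial>\<mu>) = (\<integral>x. cnj (\<xi> x) * F x - cnj (\<xi> x) * G x \<partial>\<mu>)"
    by (simp only: right_diff_distrib)
  also have "\<dots> = (\<integral>x. cnj (\<xi> x) * F x \<partial>\<mu>) - (\<integral>x. cnj (\<xi> x) * G x \<partial>\<mu>)"
    by (rule Bochner_Integration.integral_diff[OF fourier_integrable[OF assms(1,2,3)] fourier_integrable[OF assms(1,2,4)]])
  finally show ?thesis unfolding fourier_L1_def .
qed

lemma fourier_shift:
  fixes \<mu> :: "'g::topological_ab_group_add measure"
  assumes mu: "haar_measure \<mu>" and xi: "\<xi> \<in> dual_group" and F: "integrable \<mu> F"
  shows "fourier_L1 \<mu> (\<lambda>x. F (x + h) - F x) \<xi> = (\<xi> h - 1) * fourier_L1 \<mu> F \<xi>"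
proof -
  have Fm[measurable]: "F \<in> borel_measurable \<mu>" using F by simp
  have xm[measurable]: "\<xi> \<in> borel_measurable \<mu>" using dual_meas_mu[OF mu xi] .
  define G where "G y = cnj (\<xi> (y + - h)) * F y" for y
  have [measurable]: "(\<lambda>x. \<xi> (x + - h)) \<in> borel_measurable \<mu>"
    using haar_shift_meas[OF mu xm, of "-h"] .
  have Gm: "G \<in> borel_measurable \<mu>" unfolding G_def by measurable
  have GG: "G y = \<xi> h * (cnj (\<xi> y) * F y)" for y unfolding G_def using dual_props(4)[OF xi] by simp
  have Gi: "integrable \<mu> G" unfolding GG using fourier_integrable[OF mu xi F] by simp
  have Fs: "integrable \<mu> (\<lambda>x. F (x + h))" using haar_int_shift(1)[OF mu Fm] F by simp
  have "integrable \<mu> (\<lambda>x. G (x + h))" using haar_int_shift(1)[OF mu Gm] Gi by simp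
  have e1: "(\<integral>x. cnj (\<xi> x) * F (x + h) \<partial>\<mu>) = (\<integral>x. G (x + h) \<partial>\<mu>)"
    unfolding G_def by (simp add: add.assoc)
  also have "\<dots> = (\<integral>x. G x \<partial>\<mu>)" by (rule haar_int_shift(2)[OF mu Gm])
  also have "\<dots> = \<xi> h * fourier_L1 \<mu> F \<xi>" unfolding GG fourier_L1_def by simp
  finally have e: "(\<integral>x. cnj (\<xi> x) * F (x + h) \<partial>\<mu>) = \<xi> h * fourier_L1 \<mu> F \<xi>" .
  have "fourier_L1 \<mu> (\<lambda>x. F (x + h) - F x) \<xi> = fourier_L1 \<mu> (\<lambda>x. F (x + h)) \<xi> - fourier_L1 \<mu> F \<xi>"
    by (rule fourier_diff[OF mu xi Fs F])
  also have "fourier_L1 \<mu> (\<lambda>x. F (x + h)) \<xi> = \<xi> h * fourier_L1 \<mu> F \<xi>" using e by (simp add: fourier_L1_def)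
  finally show ?thesis by (simp add: algebra_simps)
qed

lemma plancherel_nn2:
  assumes "plancherel_normalized \<mu> \<nu>" "F \<in> L2 \<mu>" "integrable \<mu> F"
  shows "fourier_L1 \<mu> F \<in> L2 \<nu>" "nn2 \<nu> (fourier_L1 \<mu> F) = nn2 \<mu> F"
proof -
  show a: "fourier_L1 \<mu> F \<in> L2 \<nu>" using assms unfolding plancherel_normalized_def by blast
  have "(\<integral>\<xi>. (cmod (fourier_L1 \<mu> F \<xi>))\<^sup>2 \<partial>\<nu>) = (\<integral>x. (cmod (F x))\<^sup>2 \<partial>\<mu>)"
    using assms unfolding plancherel_normalized_def by blast
  then show "nn2 \<nu> (fourier_L1 \<mu> F) = nn2 \<mu> F" using nn2_int[OF a] nn2_int[OF assms(2)] by simp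
qed

lemma dual_eval_meas:
  assumes "dual_haar_measure \<nu>"
  shows "(\<lambda>\<xi>. \<xi> h) \<in> borel_measurable \<nu>"
proof (rule borel_measurableI)
  fix V :: "complex set" assume V: "open V"
  define B where "B = {\<xi>\<in>dual_group. \<xi> ` {h} \<subseteq> V}"
  have gen: "B \<in> {{\<xi>\<in>dual_group. \<xi> ` K \<subseteq> V} | K V. compact K \<and> open V}"
    unfolding B_def using V by (intro CollectI exI[of _ "{h}"] exI[of _ V]) auto
  have r: "radon_on dual_topology \<nu>" using assms by (simp add: dual_haar_measure_def)
  have op: "openin dual_topology B" unfolding dual_topology_def
    using gen by (simp add: openin_topology_generated_by_iff generate_topology_on.Basis)
  have "B \<in> sets \<nu>" using r op unfolding radon_on_def borel_of_def
    by (auto intro: sigma_sets.Basic)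
  moreover have "(\<lambda>\<xi>. \<xi> h) -` V \<inter> space \<nu> = B"
  proof -
    have "B \<subseteq> space \<nu>" using r op by (simp add: radon_on_def openin_subset)
    then show ?thesis using dual_space[OF assms] by (auto simp: B_def)
  qed
  ultimately show "(\<lambda>\<xi>. \<xi> h) -` V \<inter> space \<nu> \<in> sets \<nu>" by simp
qed



lemma ennreal_combine:
  fixes Y :: ennreal and a b e :: real
  assumes "a \<ge> 0" "b \<ge> 0" "e \<ge> 0"
  shows "ennreal a * (ennreal a * Y + ennreal b * ennreal e) + ennreal b * ennreal e
       = ennreal (a*a) * Y + ennreal ((a*b + b) * e)"
proof -
  have 1: "ennreal a * (ennreal b * ennreal e) = ennreal (a*b*e)" using assms by (simp add: ennreal_mult mult.assoc)
  have 2: "ennreal b * ennreal e = ennreal (b*e)" using assms by (simp add: ennreal_mult)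
  have 3: "ennreal a * (ennreal a * Y) = ennreal (a*a) * Y" using assms by (simp add: ennreal_mult mult.assoc)
  have 4: "ennreal (a*b*e) + ennreal (b*e) = ennreal ((a*b+b)*e)"
    using assms by (simp add: ennreal_plus[symmetric] algebra_simps del: ennreal_plus)
  have "ennreal a * (ennreal a * Y + ennreal b * ennreal e) + ennreal b * ennreal e
     = ennreal a * (ennreal a * Y) + (ennreal a * (ennreal b * ennreal e) + ennreal b * ennreal e)"
    by (simp only: distrib_left add.assoc)
  also have "\<dots> = ennreal (a*a) * Y + (ennreal (a*b*e) + ennreal (b*e))" by (simp only: 1 3, simp only: 2)
  also have "\<dots> = ennreal (a*a) * Y + ennreal ((a*b + b) * e)" by (simp only: 4)
  finally show ?thesis .
qed

lemma shift_L2: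
  fixes \<mu> :: "'g::topological_ab_group_add measure"
  assumes mu: "haar_measure \<mu>" and u: "u \<in> L2 \<mu>"
  shows "(\<lambda>x. u (x + h)) \<in> L2 \<mu>" "nn2 \<mu> (\<lambda>x. u (x + h)) = nn2 \<mu> u"
proof -
  have um[measurable]: "u \<in> borel_measurable \<mu>" using u by (simp add: L2_def)
  have "(\<lambda>x. ennreal ((cmod (u x))\<^sup>2)) \<in> borel_measurable \<mu>" by measurable
  from haar_nn_shift[OF mu this, of h]
  show e: "nn2 \<mu> (\<lambda>x. u (x + h)) = nn2 \<mu> u"
    unfolding nn2_def by simp
  show "(\<lambda>x. u (x + h)) \<in> L2 \<mu>" using e u haar_shift_meas[OF mu um] unfolding L2_iff_nn2 by simp
qed

lemma shift_diff_nn2: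
  fixes \<mu> :: "'g::topological_ab_group_add measure"
  assumes mu: "haar_measure \<mu>" and u: "u \<in> L2 \<mu>"
  shows "nn2 \<mu> (\<lambda>x. u (x + h) - u x) \<le> 4 * nn2 \<mu> u"
proof -
  have um[measurable]: "u \<in> borel_measurable \<mu>" using u by (simp add: L2_def)
  have [measurable]: "(\<lambda>x. u (x + h)) \<in> borel_measurable \<mu>" using haar_shift_meas[OF mu um] .
  have "nn2 \<mu> (\<lambda>x. u (x + h) - u x) \<le> 2 * nn2 \<mu> (\<lambda>x. u (x + h)) + 2 * nn2 \<mu> u"
    by (rule nn2_diff_le) measurable
  also have "\<dots> = 4 * nn2 \<mu> u" using shift_L2(2)[OF mu u]
    by (simp add: distrib_right[symmetric])
  finally show ?thesis .
qed



theorem lemma1: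
  fixes \<mu> :: "'g::{topological_ab_group_add, t2_space} measure"
    and \<nu> :: "('g \<Rightarrow> complex) measure"
    and \<gamma> :: "('g \<Rightarrow> complex) \<Rightarrow> real"
    and s :: real
  assumes "locally_compact_space (euclidean :: 'g topology)"
    and "haar_measure \<mu>"
    and "dual_haar_measure \<nu>"
    and "plancherel_normalized \<mu> \<nu>"
    and "Gamma_class \<gamma>"
    and "0 \<le> s"
    and "\<forall>\<epsilon>>0. \<exists>U. open U \<and> 0 \<in> U \<and>
           (\<forall>h\<in>U. \<forall>\<xi>\<in>dual_group. cmod (\<xi> h - 1) / (1 + (\<gamma> \<xi>)\<^sup>2) powr s \<le> \<epsilon>)"
  shows "\<exists>C :: 'g \<Rightarrow> ennreal.
           (\<forall>\<epsilon>>0. \<exists>U. open U \<and> 0 \<in> U \<and> (\<forall>h\<in>U. C h \<le> ennreal \<epsilon>)) \<and>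
           (\<forall>f\<in>Hs \<mu> \<nu> \<gamma> s. \<forall>h.
              (\<integral>\<^sup>+ x. ennreal ((cmod (f (x + h) - f x))\<^sup>2) \<partial>\<mu>) \<le> C h * Hs_norm2 \<mu> \<nu> \<gamma> s f)"
proof -
  note mu = assms(2) and nu = assms(3) and pl = assms(4)
  have spn: "space \<nu> \<subseteq> dual_group" by (rule dual_space[OF nu])
  define p where "p \<xi> = (1 + (\<gamma> \<xi>)\<^sup>2) powr s" for \<xi>
  have p1: "p \<xi> \<ge> 1" for \<xi> unfolding p_def using assms(6) by (intro ge_one_powr_ge_zero) auto
  define C where "C h = (SUP \<xi>\<in>dual_group. ennreal ((cmod (\<xi> h - 1))\<^sup>2 / p \<xi>))" for h
  have C4: "C h \<le> 4" for h
    unfolding C_def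
  proof (rule SUP_least)
    fix \<xi> :: "'g \<Rightarrow> complex" assume xi: "\<xi> \<in> dual_group"
    have "(cmod (\<xi> h - 1))\<^sup>2 \<le> 2\<^sup>2" using dual_props(5)[OF xi, of h] by (intro power_mono) auto
    moreover have "(cmod (\<xi> h - 1))\<^sup>2 / p \<xi> \<le> (cmod (\<xi> h - 1))\<^sup>2 / 1"
      using p1[of \<xi>] by (intro divide_left_mono) auto
    ultimately have "(cmod (\<xi> h - 1))\<^sup>2 / p \<xi> \<le> 4" by simp
    then show "ennreal ((cmod (\<xi> h - 1))\<^sup>2 / p \<xi>) \<le> 4"
      using ennreal_leI by fastforce
  qed
  have Cfin: "C h < \<infinity>" for h using C4[of h] by (simp add: order_le_less_trans)
  have Csmall: "\<forall>\<epsilon>>0. \<exists>U. open U \<and> 0 \<in> U \<and> (\<forall>h\<in>U. C h \<le> ennreal \<epsilon>)"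
  proof (intro allI impI)
    fix \<epsilon> :: real assume e: "\<epsilon> > 0"
    then obtain U where U: "open U" "0 \<in> U"
      "\<forall>h\<in>U. \<forall>\<xi>\<in>dual_group. cmod (\<xi> h - 1) / p \<xi> \<le> \<epsilon>/2"
      using assms(7) unfolding p_def by (meson half_gt_zero)
    show "\<exists>U. open U \<and> 0 \<in> U \<and> (\<forall>h\<in>U. C h \<le> ennreal \<epsilon>)"
    proof (intro exI conjI ballI)
      fix h assume h: "h \<in> U"
      show "C h \<le> ennreal \<epsilon>" unfolding C_def
      proof (rule SUP_least)
        fix \<xi> :: "'g \<Rightarrow> complex" assume xi: "\<xi> \<in> dual_group"
        have a: "cmod (\<xi> h - 1) / p \<xi> \<le> \<epsilon>/2" using U(3) h xi by blast
        have b: "cmod (\<xi> h - 1) \<le> 2" by (rule dual_props(5)[OF xi])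
        have "(cmod (\<xi> h - 1))\<^sup>2 / p \<xi> = cmod (\<xi> h - 1) * (cmod (\<xi> h - 1) / p \<xi>)"
          by (simp add: power2_eq_square)
        also have "\<dots> \<le> 2 * (\<epsilon>/2)"
        proof (rule mult_mono)
          have "0 < p \<xi>" using p1[of \<xi>] by linarith
          then show "0 \<le> cmod (\<xi> h - 1) / p \<xi>" by simp
        qed (use a b in auto)
        finally show "ennreal ((cmod (\<xi> h - 1))\<^sup>2 / p \<xi>) \<le> ennreal \<epsilon>" by (intro ennreal_leI) simp
      qed
    qed (use U in auto)
  qed
  have main: "nn2 \<mu> (\<lambda>x. f (x + h) - f x) \<le> C h * Hs_norm2 \<mu> \<nu> \<gamma> s f"
    if fH: "f \<in> Hs \<mu> \<nu> \<gamma> s" for f h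
  proof -
    have fL2: "f \<in> L2 \<mu>" using fH by (simp add: Hs_def)
    have fm[measurable]: "f \<in> borel_measurable \<mu>" using fL2 by (simp add: L2_def)
    define P where "P g = (g \<in> L2 \<nu> \<and>
     (\<exists>F. (\<forall>n. F n \<in> L2 \<mu> \<and> integrable \<mu> (F n)) \<and>
          (\<lambda>n. \<integral>x. (cmod (F n x - f x))\<^sup>2 \<partial>\<mu>) \<longlonglongrightarrow> 0 \<and>
          (\<lambda>n. \<integral>\<xi>. (cmod (fourier_L1 \<mu> (F n) \<xi> - g \<xi>))\<^sup>2 \<partial>\<nu>) \<longlonglongrightarrow> 0))" for g
    have FL2eq: "fourier_L2 \<mu> \<nu> f = (SOME g. P g)" unfolding fourier_L2_def P_def ..
    have exP: "\<exists>g. P g"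
    proof -
      obtain F0 where F0: "\<And>n. F0 n \<in> L2 \<mu>" "\<And>n. integrable \<mu> (F0 n)"
        and F0lim: "(\<lambda>n. \<integral>x. (cmod (F0 n x - f x))\<^sup>2 \<partial>\<mu>) \<longlonglongrightarrow> 0"
        using L2_dense[OF fL2] by blast
      have dL2: "(\<lambda>x. F0 n x - f x) \<in> L2 \<mu>" for n using L2_diff[OF F0(1) fL2] .
      have F0nn: "\<forall>e>0. \<exists>K. \<forall>n\<ge>K. nn2 \<mu> (\<lambda>x. F0 n x - f x) \<le> ennreal e"
        by (rule nn_from_tends[where u="\<lambda>n x. F0 n x - f x"]) (use dL2 F0lim in auto)
      define u where "u n = fourier_L1 \<mu> (F0 n)" for n
      have uL2: "u n \<in> L2 \<nu>" for n unfolding u_def by (rule plancherel_nn2(1)[OF pl F0(1) F0(2)])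
      have ucauchy: "\<exists>K. \<forall>m\<ge>K. \<forall>n\<ge>K. nn2 \<nu> (\<lambda>x. u m x - u n x) < ennreal e" if e: "e > 0" for e
      proof -
        obtain K where K: "\<forall>n\<ge>K. nn2 \<mu> (\<lambda>x. F0 n x - f x) \<le> ennreal (e/8)"
          using F0nn e by (meson divide_pos_pos zero_less_numeral)
        show ?thesis
        proof (intro exI allI impI)
          fix m n assume m: "K \<le> m" and n: "K \<le> n"
          have DL: "(\<lambda>x. F0 m x - F0 n x) \<in> L2 \<mu>" using L2_diff[OF F0(1) F0(1)] .
          have DI: "integrable \<mu> (\<lambda>x. F0 m x - F0 n x)" using F0(2) F0(2) by simp
          have "nn2 \<nu> (\<lambda>x. u m x - u n x) = nn2 \<nu> (fourier_L1 \<mu> (\<lambda>x. F0 m x - F0 n x))"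
            unfolding nn2_def u_def
            by (intro nn_integral_cong) (use spn fourier_diff[OF mu _ F0(2) F0(2)] in auto)
          also have "\<dots> = nn2 \<mu> (\<lambda>x. F0 m x - F0 n x)" by (rule plancherel_nn2(2)[OF pl DL DI])
          also have "\<dots> = nn2 \<mu> (\<lambda>x. (F0 m x - f x) - (F0 n x - f x))" by simp
          also have "\<dots> \<le> 2 * nn2 \<mu> (\<lambda>x. F0 m x - f x) + 2 * nn2 \<mu> (\<lambda>x. F0 n x - f x)"
            by (rule nn2_diff_le) (use dL2 in \<open>auto simp: L2_def\<close>)
          also have "\<dots> \<le> 2 * ennreal (e/8) + 2 * ennreal (e/8)"
            using K m n by (intro add_mono mult_left_mono) auto
          also have "\<dots> = ennreal (e/4) + ennreal (e/4)" using ennreal_mult'[of 2 "e/8"] e by simp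
          also have "\<dots> = ennreal (e/2)" using e by (simp add: ennreal_plus[symmetric] del: ennreal_plus)
          also have "\<dots> < ennreal e" using e by (simp add: ennreal_lessI)
          finally show "nn2 \<nu> (\<lambda>x. u m x - u n x) < ennreal e" .
        qed
      qed
      obtain g where gL2: "g \<in> L2 \<nu>" and glim: "\<forall>e>0. \<exists>K. \<forall>n\<ge>K. nn2 \<nu> (\<lambda>x. u n x - g x) \<le> ennreal e"
        using L2_complete[OF uL2 ucauchy] by blast
      have "(\<lambda>n. \<integral>\<xi>. (cmod (u n \<xi> - g \<xi>))\<^sup>2 \<partial>\<nu>) \<longlonglongrightarrow> 0"
        by (rule tends_from_nn[where u="\<lambda>n x. u n x - g x"]) (use L2_diff[OF uL2 gL2] glim in auto)
      then have "P g" unfolding P_def u_def using gL2 F0 F0lim by blast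
      then show ?thesis by blast
    qed
    define g0 where "g0 = fourier_L2 \<mu> \<nu> f"
    have Pg0: "P g0" unfolding g0_def FL2eq using exP by (rule someI_ex)
    then obtain F where g0L2: "g0 \<in> L2 \<nu>" and F: "\<And>n. F n \<in> L2 \<mu>" "\<And>n. integrable \<mu> (F n)"
      and Flim1: "(\<lambda>n. \<integral>x. (cmod (F n x - f x))\<^sup>2 \<partial>\<mu>) \<longlonglongrightarrow> 0"
      and Flim2: "(\<lambda>n. \<integral>\<xi>. (cmod (fourier_L1 \<mu> (F n) \<xi> - g0 \<xi>))\<^sup>2 \<partial>\<nu>) \<longlonglongrightarrow> 0"
      unfolding P_def by blast
    have Fhat: "fourier_L1 \<mu> (F n) \<in> L2 \<nu>" for n by (rule plancherel_nn2(1)[OF pl F(1) F(2)])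
    have E1: "\<forall>e>0. \<exists>K. \<forall>n\<ge>K. nn2 \<mu> (\<lambda>x. F n x - f x) \<le> ennreal e"
      by (rule nn_from_tends[where u="\<lambda>n x. F n x - f x"]) (use L2_diff[OF F(1) fL2] Flim1 in auto)
    have E2: "\<forall>e>0. \<exists>K. \<forall>n\<ge>K. nn2 \<nu> (\<lambda>x. fourier_L1 \<mu> (F n) x - g0 x) \<le> ennreal e"
      by (rule nn_from_tends[where u="\<lambda>n x. fourier_L1 \<mu> (F n) x - g0 x"]) (use L2_diff[OF Fhat g0L2] Flim2 in auto)
    have g0m[measurable]: "g0 \<in> borel_measurable \<nu>" using g0L2 by (simp add: L2_def)
    have wm[measurable]: "(\<lambda>\<xi>. \<xi> h) \<in> borel_measurable \<nu>" by (rule dual_eval_meas[OF nu])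
    have fsm[measurable]: "(\<lambda>x. f (x + h)) \<in> borel_measurable \<mu>" by (rule haar_shift_meas[OF mu fm])
    define X where "X = nn2 \<mu> (\<lambda>x. f (x + h) - f x)"
    define Y where "Y = nn2 \<nu> (\<lambda>\<xi>. (\<xi> h - 1) * g0 \<xi>)"
    have claim1: "X \<le> ennreal ((1 + d) * (1 + d)) * Y" if d: "d > 0" for d
    proof (rule ennreal_le_epsilon)
      fix \<epsilon> :: real assume eps: "0 < \<epsilon>"
      define a where "a = 1 + d"
      define b where "b = 1 + 1/d"
      have a0: "a \<ge> 0" using d by (simp add: a_def)
      have b0: "b > 0" using d unfolding b_def by (intro add_pos_pos) auto
      define c where "c = 4 * (a * b + b)"
      have c0: "c > 0" using a0 b0 by (simp add: c_def add_nonneg_pos)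
      define e' where "e' = \<epsilon> / c"
      have e'0: "e' > 0" using eps c0 by (simp add: e'_def)
      obtain K1 where K1: "\<forall>n\<ge>K1. nn2 \<mu> (\<lambda>x. F n x - f x) \<le> ennreal e'" using E1 e'0 by blast
      obtain K2 where K2: "\<forall>n\<ge>K2. nn2 \<nu> (\<lambda>x. fourier_L1 \<mu> (F n) x - g0 x) \<le> ennreal e'" using E2 e'0 by blast
      define n where "n = max K1 K2"
      have n1: "nn2 \<mu> (\<lambda>x. F n x - f x) \<le> ennreal e'" using K1 by (simp add: n_def)
      have n2: "nn2 \<nu> (\<lambda>x. fourier_L1 \<mu> (F n) x - g0 x) \<le> ennreal e'" using K2 by (simp add: n_def)
      have Fnm[measurable]: "F n \<in> borel_measurable \<mu>" using F(1) by (simp add: L2_def)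
      have Fnsm[measurable]: "(\<lambda>x. F n (x + h)) \<in> borel_measurable \<mu>" by (rule haar_shift_meas[OF mu Fnm])
      have Fhm[measurable]: "fourier_L1 \<mu> (F n) \<in> borel_measurable \<nu>" using Fhat by (simp add: L2_def)
      define T where "T x = F n (x + h) - F n x" for x
      have TL2: "T \<in> L2 \<mu>" unfolding T_def by (rule L2_diff[OF shift_L2(1)[OF mu F(1)] F(1)])
      have TI: "integrable \<mu> T" unfolding T_def
        using haar_int_shift(1)[OF mu Fnm, of h] F(2)[of n] by simp
      have s1: "X \<le> ennreal a * nn2 \<mu> T + ennreal b * nn2 \<mu> (\<lambda>x. (f (x + h) - f x) - T x)"
        unfolding X_def a_def b_def T_def by (rule nn2_split[OF d]) measurable
      have "nn2 \<mu> (\<lambda>x. (f (x + h) - f x) - T x) = nn2 \<mu> (\<lambda>x. (f (x + h) - F n (x + h)) - (f x - F n x))"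
        unfolding T_def by (simp add: algebra_simps)
      also have "\<dots> \<le> 4 * nn2 \<mu> (\<lambda>x. f x - F n x)"
        by (rule shift_diff_nn2[OF mu L2_diff[OF fL2 F(1)]])
      also have "nn2 \<mu> (\<lambda>x. f x - F n x) = nn2 \<mu> (\<lambda>x. F n x - f x)"
        unfolding nn2_def by (simp add: norm_minus_commute)
      finally have s2a: "nn2 \<mu> (\<lambda>x. (f (x + h) - f x) - T x) \<le> 4 * nn2 \<mu> (\<lambda>x. F n x - f x)" .
      have "4 * nn2 \<mu> (\<lambda>x. F n x - f x) \<le> 4 * ennreal e'" using n1 by (rule mult_left_mono) simp
      then have s2: "nn2 \<mu> (\<lambda>x. (f (x + h) - f x) - T x) \<le> ennreal (4 * e')"
        using s2a ennreal_mult'[of 4 e'] by simp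
      have "nn2 \<mu> T = nn2 \<nu> (fourier_L1 \<mu> T)" by (rule plancherel_nn2(2)[OF pl TL2 TI, symmetric])
      also have "\<dots> = nn2 \<nu> (\<lambda>\<xi>. (\<xi> h - 1) * fourier_L1 \<mu> (F n) \<xi>)"
        unfolding nn2_def T_def
        by (intro nn_integral_cong) (use spn fourier_shift[OF mu _ F(2)] in auto)
      also have "\<dots> \<le> ennreal a * Y + ennreal b * nn2 \<nu> (\<lambda>\<xi>. (\<xi> h - 1) * fourier_L1 \<mu> (F n) \<xi> - (\<xi> h - 1) * g0 \<xi>)"
        unfolding Y_def a_def b_def by (rule nn2_split[OF d]) measurable
      finally have s3: "nn2 \<mu> T \<le> ennreal a * Y + ennreal b * nn2 \<nu> (\<lambda>\<xi>. (\<xi> h - 1) * fourier_L1 \<mu> (F n) \<xi> - (\<xi> h - 1) * g0 \<xi>)" .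
      have "nn2 \<nu> (\<lambda>\<xi>. (\<xi> h - 1) * fourier_L1 \<mu> (F n) \<xi> - (\<xi> h - 1) * g0 \<xi>)
          \<le> (\<integral>\<^sup>+\<xi>. 4 * ennreal ((cmod (fourier_L1 \<mu> (F n) \<xi> - g0 \<xi>))\<^sup>2) \<partial>\<nu>)"
        unfolding nn2_def
      proof (intro nn_integral_mono)
        fix \<xi> assume "\<xi> \<in> space \<nu>"
        then have xi: "\<xi> \<in> dual_group" using spn by auto
        have w: "cmod (\<xi> h - 1) \<le> 2" by (rule dual_props(5)[OF xi])
        have "(cmod ((\<xi> h - 1) * fourier_L1 \<mu> (F n) \<xi> - (\<xi> h - 1) * g0 \<xi>))\<^sup>2
            = (cmod (\<xi> h - 1))\<^sup>2 * (cmod (fourier_L1 \<mu> (F n) \<xi> - g0 \<xi>))\<^sup>2"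
          by (simp add: right_diff_distrib[symmetric] norm_mult power_mult_distrib)
        also have "\<dots> \<le> 2\<^sup>2 * (cmod (fourier_L1 \<mu> (F n) \<xi> - g0 \<xi>))\<^sup>2"
          using w by (intro mult_right_mono power_mono) auto
        finally have A: "(cmod ((\<xi> h - 1) * fourier_L1 \<mu> (F n) \<xi> - (\<xi> h - 1) * g0 \<xi>))\<^sup>2 \<le> 2\<^sup>2 * (cmod (fourier_L1 \<mu> (F n) \<xi> - g0 \<xi>))\<^sup>2" .
        show "ennreal ((cmod ((\<xi> h - 1) * fourier_L1 \<mu> (F n) \<xi> - (\<xi> h - 1) * g0 \<xi>))\<^sup>2)
            \<le> 4 * ennreal ((cmod (fourier_L1 \<mu> (F n) \<xi> - g0 \<xi>))\<^sup>2)"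
        proof -
          have "ennreal ((cmod ((\<xi> h - 1) * fourier_L1 \<mu> (F n) \<xi> - (\<xi> h - 1) * g0 \<xi>))\<^sup>2) \<le> ennreal (4 * (cmod (fourier_L1 \<mu> (F n) \<xi> - g0 \<xi>))\<^sup>2)"
            using A by (intro ennreal_leI) simp
          also have "\<dots> = 4 * ennreal ((cmod (fourier_L1 \<mu> (F n) \<xi> - g0 \<xi>))\<^sup>2)"
            using ennreal_mult'[of 4 "(cmod (fourier_L1 \<mu> (F n) \<xi> - g0 \<xi>))\<^sup>2"] by simp
          finally show ?thesis .
        qed
      qed
      also have "\<dots> = 4 * nn2 \<nu> (\<lambda>x. fourier_L1 \<mu> (F n) x - g0 x)"
        unfolding nn2_def by (rule nn_integral_cmult) measurable
      also have "\<dots> \<le> 4 * ennreal e'" using n2 by (intro mult_left_mono) auto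
      finally have s4: "nn2 \<nu> (\<lambda>\<xi>. (\<xi> h - 1) * fourier_L1 \<mu> (F n) \<xi> - (\<xi> h - 1) * g0 \<xi>) \<le> ennreal (4 * e')"
        by (simp add: ennreal_mult')
      have "X \<le> ennreal a * (ennreal a * Y + ennreal b * ennreal (4 * e')) + ennreal b * ennreal (4 * e')"
        using s1 s3 s4 s2
        by (meson add_mono mult_left_mono order_trans zero_le order_refl)
      also have "\<dots> = ennreal (a * a) * Y + ennreal ((a * b + b) * (4 * e'))"
        using a0 b0 e'0 by (intro ennreal_combine) auto
      also have "(a * b + b) * (4 * e') = \<epsilon>" using c0 by (simp add: e'_def c_def field_simps)
      finally show "X \<le> ennreal ((1 + d) * (1 + d)) * Y + ennreal \<epsilon>" by (simp add: a_def)
    qed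
    have claim2: "X \<le> Y"
    proof (cases "Y = \<infinity>")
      case True then show ?thesis by simp
    next
      case False
      then obtain y where y: "Y = ennreal y" "y \<ge> 0" by (cases Y) auto
      show ?thesis
      proof (rule ennreal_le_epsilon)
        fix \<epsilon> :: real assume eps: "\<epsilon> > 0"
        define d where "d = min 1 (\<epsilon> / (3 * y + 1))"
        have d0: "d > 0" using eps y by (simp add: d_def)
        have d1: "d \<le> 1" by (simp add: d_def)
        have q: "3 * y + 1 > 0" using y by simp
        have "d \<le> \<epsilon> / (3 * y + 1)" by (simp add: d_def)
        then have "d * (3 * y + 1) \<le> \<epsilon> / (3 * y + 1) * (3 * y + 1)" using q by (intro mult_right_mono) auto
        also have "\<dots> = \<epsilon>" using q by simp
        finally have d2: "d * (3 * y + 1) \<le> \<epsilon>" .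
        have "(1 + d) * (1 + d) * y = y + (2 * d + d * d) * y" by (simp add: algebra_simps)
        also have "(2 * d + d * d) * y \<le> (3 * d) * y"
          using d0 d1 y by (intro mult_right_mono) (auto simp: mult_le_cancel_left1)
        also have "(3 * d) * y \<le> \<epsilon>" using d2 d0 by (simp add: algebra_simps)
        finally have "(1 + d) * (1 + d) * y \<le> y + \<epsilon>" by simp
        then have "ennreal ((1 + d) * (1 + d)) * Y \<le> Y + ennreal \<epsilon>"
          using y eps d0 by (simp add: ennreal_mult[symmetric] ennreal_plus[symmetric] ennreal_leI del: ennreal_plus)
        then show "X \<le> Y + ennreal \<epsilon>" using claim1[OF d0] by (rule order_trans[rotated])
      qed
    qed
    have claim3: "Y \<le> C h * Hs_norm2 \<mu> \<nu> \<gamma> s f"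
    proof -
      have "Y \<le> (\<integral>\<^sup>+\<xi>. C h * ennreal (p \<xi> * (cmod (g0 \<xi>))\<^sup>2) \<partial>\<nu>)"
        unfolding Y_def nn2_def
      proof (intro nn_integral_mono)
        fix \<xi> assume "\<xi> \<in> space \<nu>"
        then have xi: "\<xi> \<in> dual_group" using spn by auto
        have pp: "p \<xi> > 0" using p1[of \<xi>] by simp
        have "(cmod ((\<xi> h - 1) * g0 \<xi>))\<^sup>2 = ((cmod (\<xi> h - 1))\<^sup>2 / p \<xi>) * (p \<xi> * (cmod (g0 \<xi>))\<^sup>2)"
          using pp by (simp add: norm_mult power_mult_distrib)
        then have "ennreal ((cmod ((\<xi> h - 1) * g0 \<xi>))\<^sup>2) = ennreal (((cmod (\<xi> h - 1))\<^sup>2 / p \<xi>) * (p \<xi> * (cmod (g0 \<xi>))\<^sup>2))"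
          by (simp only:)
        also have "\<dots> = ennreal ((cmod (\<xi> h - 1))\<^sup>2 / p \<xi>) * ennreal (p \<xi> * (cmod (g0 \<xi>))\<^sup>2)"
          by (rule ennreal_mult) (use pp in auto)
        also have "\<dots> \<le> C h * ennreal (p \<xi> * (cmod (g0 \<xi>))\<^sup>2)"
          unfolding C_def using xi by (intro mult_right_mono SUP_upper) auto
        finally show "ennreal ((cmod ((\<xi> h - 1) * g0 \<xi>))\<^sup>2) \<le> C h * ennreal (p \<xi> * (cmod (g0 \<xi>))\<^sup>2)" .
      qed
      also have "\<dots> \<le> C h * (\<integral>\<^sup>+\<xi>. ennreal (p \<xi> * (cmod (g0 \<xi>))\<^sup>2) \<partial>\<nu>)"
        by (rule nn_cmult_le[OF Cfin])
      also have "(\<integral>\<^sup>+\<xi>. ennreal (p \<xi> * (cmod (g0 \<xi>))\<^sup>2) \<partial>\<nu>) = Hs_norm2 \<mu> \<nu> \<gamma> s f"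
        unfolding Hs_norm2_def g0_def p_def ..
      finally show ?thesis .
    qed
    show ?thesis using claim2 claim3 unfolding X_def by (rule order_trans)
  qed
  show ?thesis
    by (rule exI[of _ C]) (use Csmall main in \<open>auto simp: nn2_def\<close>)
qed


end
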